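(* Let $m,n$ be positive integers. For any $(A,\boldsymbol{\gamma})\in[0,1)^{m\times n}\times[0,1)^m$, we have $(A,\boldsymbol{\gamma})\in\Omega(m,n)$ if and only if $S_l(A,\boldsymbol{\gamma})<+\infty$ for all $l\in\mathbb{N}$.
   Context: $[0,1)^{m\times n}$ is the set of real $m\times n$ matrices with entries in $[0,1)$. For $\boldsymbol{x}\in\mathbb{R}^n$, $\|\boldsymbol{x}\|=\max_i|x_i|$; for $\boldsymbol{y}\in\mathbb{R}^m$, $\langle\boldsymbol{y}\rangle=\min_{\boldsymbol{p}\in\mathbb{Z}^m}\|\boldsymbol{y}-\boldsymbol{p}\|$. For $\psi:\mathbb{N}\to[0,\infty)$, $W_{m,n}(\psi)$ is the set of pairs $(A,\boldsymbol{\gamma})$ such that $\langle A\boldsymbol{q}-\boldsymbol{\gamma}\rangle<\psi(\|\boldsymbol{q}\|)$ for infinitely many $\boldsymbol{q}\in\mathbb{Z}^n$. "Decreasing" means non-increasing. $\mathcal{D}$ is the set of decreasing $\psi:\mathbb{N}\to[0,\infty)$ with $\sum_{q\ge1}q^{n-1}\psi(q)^m=\infty$; $\Omega(m,n)=\bigcap_{\psi\in\mathcal{D}}W_{m,n}(\psi)$. For $l\in\mathbb{N}$, $S_l(A,\boldsymbol{\gamma})=\sum_{t=l}^\infty t^{n-1}\min_{\boldsymbol{q}\in\mathbb{Z}^n,\ l\le\|\boldsymbol{q}\|\le t}\langle A\boldsymbol{q}-\boldsymbol{\gamma}\rangle^m$. *)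

theory Defs
  imports "HOL-Analysis.Analysis"
begin

definition vnorm :: "'a::{linordered_idom} ^ 'k \<Rightarrow> 'a" where
  "vnorm x = Max (range (\<lambda>i. \<bar>x $ i\<bar>))"

definition ivec :: "int ^ 'k \<Rightarrow> real ^ 'k" where
  "ivec q = (\<chi> i. real_of_int (q $ i))"

definition distZ :: "real ^ 'm \<Rightarrow> real" where
  "distZ y = Inf ((\<lambda>p. vnorm (y - ivec p)) ` UNIV)"

definition W :: "(nat \<Rightarrow> real) \<Rightarrow> ((real ^ 'n ^ 'm) \<times> (real ^ 'm)) set" where
  "W \<psi> = {(A, \<gamma>). infinite {q :: int ^ 'n.
      distZ (A *v ivec q - \<gamma>) < \<psi> (nat (vnorm q))}}"

definition Dcls :: "nat \<Rightarrow> nat \<Rightarrow> (nat \<Rightarrow> real) set" where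
  "Dcls m n = {\<psi>. (\<forall>q. 0 \<le> \<psi> q) \<and> (\<forall>a b. 1 \<le> a \<longrightarrow> a \<le> b \<longrightarrow> \<psi> b \<le> \<psi> a) \<and>
      \<not> summable (\<lambda>k. real (Suc k) ^ (n - 1) * \<psi> (Suc k) ^ m)}"

definition Omega :: "((real ^ 'n ^ 'm) \<times> (real ^ 'm)) set" where
  "Omega = (\<Inter>\<psi> \<in> Dcls CARD('m) CARD('n). W \<psi>)"

definition Sterm :: "real ^ 'n ^ 'm \<Rightarrow> real ^ 'm \<Rightarrow> nat \<Rightarrow> nat \<Rightarrow> real" where
  "Sterm A \<gamma> l t = real t ^ (CARD('n) - 1) *
     Min ((\<lambda>q. distZ (A *v ivec q - \<gamma>) ^ CARD('m)) `
          {q :: int ^ 'n. int l \<le> vnorm q \<and> vnorm q \<le> int t})"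

text \<open>S_l(A,gamma) < +infinity: the nonnegative series sum_{t>=l} Sterm converges.\<close>
definition S_finite :: "real ^ 'n ^ 'm \<Rightarrow> real ^ 'm \<Rightarrow> nat \<Rightarrow> bool" where
  "S_finite A \<gamma> l = summable (\<lambda>k. Sterm A \<gamma> l (l + k))"

end

theory Submission
  imports Defs
begin

lemma vnorm_ge: "\<bar>x $ i\<bar> \<le> vnorm (x :: 'a::linordered_idom ^ 'k)"
  unfolding vnorm_def by (rule Max_ge) auto

lemma vnorm_const: "vnorm ((\<chi> i. c) :: 'a::linordered_idom ^ 'k) = \<bar>c\<bar>"
proof -
  have "range (\<lambda>i. \<bar>((\<chi> i. c) :: 'a ^ 'k) $ i\<bar>) = {\<bar>c\<bar>}" by auto
  then show ?thesis unfolding vnorm_def by simp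
qed

lemma fin_bounded: "finite {q :: int ^ 'k. vnorm q \<le> c}"
proof -
  have fin: "finite (vec_nth -` (PiE UNIV (\<lambda>_::'k. {-c..c})))"
    by (rule finite_vimageI) (auto intro: finite_PiE simp: inj_def vec_eq_iff)
  have "{q :: int ^ 'k. vnorm q \<le> c} \<subseteq> vec_nth -` (PiE UNIV (\<lambda>_::'k. {-c..c}))"
  proof
    fix q :: "int ^ 'k" assume "q \<in> {q. vnorm q \<le> c}"
    then have "\<bar>q $ i\<bar> \<le> c" for i using vnorm_ge[of q i] by auto
    then show "q \<in> vec_nth -` (PiE UNIV (\<lambda>_::'k. {-c..c}))" by (auto simp: abs_le_iff) (metis add.inverse_inverse neg_le_iff_le)
  qed
  then show ?thesis using fin finite_subset by blast
qed

lemma distZ_nonneg: "0 \<le> distZ y"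
  unfolding distZ_def
proof (rule cInf_greatest)
  show "(\<lambda>p. vnorm (y - ivec p)) ` UNIV \<noteq> {}" by simp
  fix x assume "x \<in> (\<lambda>p. vnorm (y - ivec p)) ` UNIV"
  then obtain p where "x = vnorm (y - ivec p)" by auto
  moreover obtain i :: 'a where True by simp
  ultimately show "0 \<le> x" using vnorm_ge[of "y - ivec p" i] by linarith
qed

lemma Min_pow:
  assumes "finite S" "S \<noteq> {}" "\<And>q. q \<in> S \<Longrightarrow> 0 \<le> (f q :: real)"
  shows "Min ((\<lambda>q. f q ^ k) ` S) = Min (f ` S) ^ k"
proof -
  have "Min (f ` S) \<in> f ` S" using assms by simp
  then obtain q0 where q0: "q0 \<in> S" "f q0 = Min (f ` S)" by auto
  show ?thesis
  proof (rule Min_eqI)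
    show "finite ((\<lambda>q. f q ^ k) ` S)" using assms by simp
    show "Min (f ` S) ^ k \<in> (\<lambda>q. f q ^ k) ` S" using q0 by force
    fix y assume "y \<in> (\<lambda>q. f q ^ k) ` S"
    then obtain q where "q \<in> S" "y = f q ^ k" by auto
    moreover have "Min (f ` S) \<le> f q" using assms \<open>q \<in> S\<close> by simp
    ultimately show "Min (f ` S) ^ k \<le> y" using q0 assms(3) by (metis power_mono)
  qed
qed

lemma B_fin: "finite {q :: int ^ 'k. int l \<le> vnorm q \<and> vnorm q \<le> int t}"
  by (rule finite_subset[OF _ fin_bounded[of "int t"]]) auto

lemma B_ne: "l \<le> t \<Longrightarrow> {q :: int ^ 'k. int l \<le> vnorm q \<and> vnorm q \<le> int t} \<noteq> {}"
  using vnorm_const[of "int l", where 'k='k] by (metis (mono_tags, lifting) abs_of_nat empty_iff mem_Collect_eq of_nat_mono order_refl)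


theorem lemma2p1:
  fixes A :: "real ^ 'n ^ 'm" and \<gamma> :: "real ^ 'm"
  assumes "\<forall>i j. 0 \<le> A $ i $ j \<and> A $ i $ j < 1"
    and "\<forall>i. 0 \<le> \<gamma> $ i \<and> \<gamma> $ i < 1"
  shows "(A, \<gamma>) \<in> Omega \<longleftrightarrow> (\<forall>l \<ge> 1. S_finite A \<gamma> l)"
proof -
  define D where "D q = distZ (A *v ivec q - \<gamma>)" for q :: "int ^ 'n"
  define B where "B l t = {q :: int ^ 'n. int l \<le> vnorm q \<and> vnorm q \<le> int t}" for l t :: nat
  have Dnn: "0 \<le> D q" for q unfolding D_def by (rule distZ_nonneg)
  have Bfin: "finite (B l t)" for l t unfolding B_def by (rule B_fin)
  have Bne: "l \<le> t \<Longrightarrow> B l t \<noteq> {}" for l t unfolding B_def by (rule B_ne)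
  have Sterm_eq: "Sterm A \<gamma> l t = real t ^ (CARD('n) - 1) * Min (D ` B l t) ^ CARD('m)"
    if "l \<le> t" for l t
  proof -
    have "Min ((\<lambda>q. D q ^ CARD('m)) ` B l t) = Min (D ` B l t) ^ CARD('m)"
      by (rule Min_pow[OF Bfin Bne[OF that] Dnn])
    then show ?thesis unfolding Sterm_def D_def B_def by simp
  qed
  show ?thesis
  proof
    assume Om: "(A, \<gamma>) \<in> Omega"
    show "\<forall>l \<ge> 1. S_finite A \<gamma> l"
    proof (intro allI impI, rule ccontr)
      fix l :: nat assume l1: "1 \<le> l" and ns: "\<not> S_finite A \<gamma> l"
      define \<psi> where "\<psi> t = Min (D ` B l (max t l))" for t
      have psi_nn: "0 \<le> \<psi> t" for t
        unfolding \<psi>_def using Bfin Bne[of l "max t l"] Dnn by (simp add: Min_ge_iff)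
      have psi_dec: "\<psi> b \<le> \<psi> a" if "a \<le> b" for a b
        unfolding \<psi>_def
        by (rule Min_antimono) (use that Bfin Bne[of l "max a l"] in \<open>auto simp: B_def\<close>)
      define g where "g t = real t ^ (CARD('n) - 1) * \<psi> t ^ CARD('m)" for t
      have "g (l + k) = Sterm A \<gamma> l (l + k)" for k
        unfolding g_def \<psi>_def using Sterm_eq[of l "l + k"] by simp
      hence "\<not> summable (\<lambda>k. g (k + l))" using ns unfolding S_finite_def by (simp add: add.commute)
      hence "\<not> summable (\<lambda>k. g (Suc k))" by (simp add: summable_Suc_iff)
      hence "\<psi> \<in> Dcls CARD('m) CARD('n)"
        unfolding Dcls_def g_def using psi_nn psi_dec by auto
      hence "(A, \<gamma>) \<in> W \<psi>" using Om unfolding Omega_def by auto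
      hence inf: "infinite {q :: int ^ 'n. D q < \<psi> (nat (vnorm q))}" unfolding W_def D_def by simp
      have "{q :: int ^ 'n. D q < \<psi> (nat (vnorm q))} \<subseteq> {q. vnorm q \<le> int l}"
      proof
        fix q assume q: "q \<in> {q :: int ^ 'n. D q < \<psi> (nat (vnorm q))}"
        show "q \<in> {q. vnorm q \<le> int l}"
        proof (rule ccontr)
          assume "q \<notin> {q. vnorm q \<le> int l}"
          hence gt: "vnorm q > int l" by simp
          hence "q \<in> B l (max (nat (vnorm q)) l)" unfolding B_def by auto
          hence "\<psi> (nat (vnorm q)) \<le> D q" unfolding \<psi>_def using Bfin by simp
          with q show False by simp
        qed
      qed
      with inf fin_bounded show False using finite_subset by blast
    qed
  next
    assume Sf: "\<forall>l \<ge> 1. S_finite A \<gamma> l"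
    show "(A, \<gamma>) \<in> Omega"
      unfolding Omega_def
    proof
      fix \<psi> assume psi: "\<psi> \<in> Dcls CARD('m) CARD('n)"
      hence psi_nn: "\<And>q. 0 \<le> \<psi> q" and psi_dec: "\<And>a b. 1 \<le> a \<Longrightarrow> a \<le> b \<Longrightarrow> \<psi> b \<le> \<psi> a"
        and ns: "\<not> summable (\<lambda>k. real (Suc k) ^ (CARD('n) - 1) * \<psi> (Suc k) ^ CARD('m))"
        unfolding Dcls_def by auto
      show "(A, \<gamma>) \<in> W \<psi>"
      proof (rule ccontr)
        assume "(A, \<gamma>) \<notin> W \<psi>"
        hence fin: "finite {q :: int ^ 'n. D q < \<psi> (nat (vnorm q))}" unfolding W_def D_def by simp
        define l where "l = Suc (Max (insert 0 ((\<lambda>q. nat (vnorm q)) ` {q :: int ^ 'n. D q < \<psi> (nat (vnorm q))})))"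
        have l1: "1 \<le> l" unfolding l_def by simp
        have big: "\<psi> (nat (vnorm q)) \<le> D q" if "int l \<le> vnorm q" for q
        proof (rule ccontr)
          assume "\<not> \<psi> (nat (vnorm q)) \<le> D q"
          hence "q \<in> {q :: int ^ 'n. D q < \<psi> (nat (vnorm q))}" by simp
          hence "nat (vnorm q) \<le> Max (insert 0 ((\<lambda>q. nat (vnorm q)) ` {q :: int ^ 'n. D q < \<psi> (nat (vnorm q))}))"
            using fin by (intro Max_ge) auto
          with that show False unfolding l_def by linarith
        qed
        define g where "g t = real t ^ (CARD('n) - 1) * \<psi> t ^ CARD('m)" for t
        have "summable (\<lambda>k. Sterm A \<gamma> l (l + k))" using Sf l1 unfolding S_finite_def by simp
        moreover have "norm (g (l + k)) \<le> Sterm A \<gamma> l (l + k)" for k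
        proof -
          have "\<psi> (l + k) \<le> Min (D ` B l (l + k))"
          proof (subst Min_ge_iff)
            show "finite (D ` B l (l + k))" using Bfin by simp
            show "D ` B l (l + k) \<noteq> {}" using Bne[of l "l+k"] by simp
            show "\<forall>a\<in>D ` B l (l + k). \<psi> (l + k) \<le> a"
            proof
              fix a assume "a \<in> D ` B l (l + k)"
              then obtain q where q: "q \<in> B l (l + k)" "a = D q" by auto
              hence "1 \<le> nat (vnorm q)" "nat (vnorm q) \<le> l + k" "int l \<le> vnorm q"
                using l1 unfolding B_def by auto
              hence "\<psi> (l + k) \<le> \<psi> (nat (vnorm q))" by (intro psi_dec)
              also have "\<dots> \<le> D q" by (rule big) fact
              finally show "\<psi> (l + k) \<le> a" using q by simp
            qed
          qed
          hence "\<psi> (l + k) ^ CARD('m) \<le> Min (D ` B l (l + k)) ^ CARD('m)"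
            using psi_nn by (intro power_mono) auto
          hence "g (l + k) \<le> Sterm A \<gamma> l (l + k)"
            unfolding g_def Sterm_eq[of l "l + k", OF le_add1] by (intro mult_left_mono) auto
          moreover have "0 \<le> g (l + k)" unfolding g_def using psi_nn by simp
          ultimately show ?thesis by simp
        qed
        ultimately have "summable (\<lambda>k. g (l + k))"
          by (intro summable_comparison_test[of "\<lambda>k. g (l + k)"]) auto
        hence "summable (\<lambda>k. g (k + l))" by (simp add: add.commute)
        hence "summable g" by simp
        hence "summable (\<lambda>k. g (Suc k))" by (simp add: summable_Suc_iff)
        with ns show False unfolding g_def by simp
      qed
    qed
  qed
qed

end
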